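(* Let $x_1\ge x_2\ge\cdots\ge x_n\ge 0$ be integers and suppose there is a set $S\subseteq[n]$ of size $q$ such that $x_i=0$ for all $i\in S$. Increase $x_i$ by $1$ for every $i\in S$. Then $\Phi=\sum_{i=1}^n x_i^2$ increases by exactly $q$, and $\Psi = n\sum_i|x_i|+\sum_{i<j}|x_i-x_j|$ increases by at least $q^2$. *)

theory Defs
  imports Main
begin

definition Phi :: "nat \<Rightarrow> (nat \<Rightarrow> int) \<Rightarrow> int" where
  "Phi n x = (\<Sum>i\<in>{1..n}. (x i)^2)"

definition Psi :: "nat \<Rightarrow> (nat \<Rightarrow> int) \<Rightarrow> int" where
  "Psi n x = int n * (\<Sum>i\<in>{1..n}. \<bar>x i\<bar>)
     + (\<Sum>(i,j)\<in>{(i,j). i \<in> {1..n} \<and> j \<in> {1..n} \<and> i < j}. \<bar>x i - x j\<bar>)"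

end

theory Submission
  imports Defs
begin

theorem proposition6p3:
  fixes n q :: nat and x :: "nat \<Rightarrow> int" and S :: "nat set"
  assumes sorted: "\<And>i j. 1 \<le> i \<Longrightarrow> i \<le> j \<Longrightarrow> j \<le> n \<Longrightarrow> x i \<ge> x j"
    and nonneg: "\<And>i. 1 \<le> i \<Longrightarrow> i \<le> n \<Longrightarrow> x i \<ge> 0"
    and S_sub: "S \<subseteq> {1..n}"
    and S_card: "card S = q"
    and S_zero: "\<And>i. i \<in> S \<Longrightarrow> x i = 0"
  defines "y \<equiv> (\<lambda>i. if i \<in> S then x i + 1 else x i)"
  shows "Phi n y = Phi n x + int q \<and> Psi n y \<ge> Psi n x + (int q)^2"
proof -
  have finS: "finite S" using S_sub finite_subset by blast
  have sumS: "(\<Sum>i\<in>{1..n}. (if i \<in> S then 1 else 0 :: int)) = int q"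
  proof -
    have "(\<Sum>i\<in>{1..n}. (if i \<in> S then 1 else 0 :: int)) = (\<Sum>i\<in>{1..n} \<inter> S. 1)"
      by (simp add: sum.If_cases)
    also have "{1..n} \<inter> S = S" using S_sub by blast
    finally show ?thesis using S_card by simp
  qed
  have sq: "(y i)^2 = (x i)^2 + (if i \<in> S then 1 else 0)" for i
    using S_zero[of i] by (simp add: y_def)
  have ab: "\<bar>y i\<bar> = \<bar>x i\<bar> + (if i \<in> S then 1 else 0)" if "i \<in> {1..n}" for i
    using S_zero[of i] nonneg[of i] that by (simp add: y_def)
  have P1: "Phi n y = Phi n x + int q"
    unfolding Phi_def using sumS by (simp add: sq sum.distrib)
  have A1: "(\<Sum>i\<in>{1..n}. \<bar>y i\<bar>) = (\<Sum>i\<in>{1..n}. \<bar>x i\<bar>) + int q"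
    using sumS by (simp add: ab sum.distrib)
  define P where "P = {(i,j). i \<in> {1..n} \<and> j \<in> {1..n} \<and> i < j}"
  define E where "E = {(i,j). (i,j) \<in> P \<and> ((i \<in> S) \<noteq> (j \<in> S))}"
  have finP: "finite P" unfolding P_def
    by (rule finite_subset[of _ "{1..n} \<times> {1..n}"]) auto
  have EP: "E \<subseteq> P" unfolding E_def by auto
  have finE: "finite E" using finP EP finite_subset by blast
  have pw: "\<bar>y i - y j\<bar> - \<bar>x i - x j\<bar> \<ge> - (if (i,j) \<in> E then 1 else 0)"
    if "(i,j) \<in> P" for i j
  proof -
    have i: "i \<in> {1..n}" and j: "j \<in> {1..n}" using that unfolding P_def by auto
    show ?thesis
      using S_zero[of i] S_zero[of j] nonneg[of i] nonneg[of j] i j that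
      unfolding E_def y_def by auto
  qed
  have "(\<Sum>p\<in>P. \<bar>y (fst p) - y (snd p)\<bar> - \<bar>x (fst p) - x (snd p)\<bar>)
        \<ge> (\<Sum>p\<in>P. - (if p \<in> E then 1 else 0::int))"
    by (rule sum_mono) (use pw in force)
  also have "(\<Sum>p\<in>P. - (if p \<in> E then 1 else 0::int)) = - int (card E)"
  proof -
    have "(\<Sum>p\<in>P. (if p \<in> E then 1 else 0::int)) = (\<Sum>p\<in>P \<inter> E. 1)"
      using finP by (simp add: sum.If_cases)
    also have "P \<inter> E = E" using EP by blast
    finally show ?thesis by (simp add: sum_negf)
  qed
  finally have D: "(\<Sum>p\<in>P. \<bar>y (fst p) - y (snd p)\<bar>) \<ge> (\<Sum>p\<in>P. \<bar>x (fst p) - x (snd p)\<bar>) - int (card E)"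
    by (simp add: sum_subtractf)
  have cE: "card E \<le> q * (n - q)"
  proof -
    define g where "g = (\<lambda>(i::nat,j::nat). if i \<in> S then (i,j) else (j,i))"
    have "inj_on g E" unfolding inj_on_def g_def E_def P_def by auto
    moreover have "g ` E \<subseteq> S \<times> ({1..n} - S)" unfolding g_def E_def P_def by auto
    ultimately have "card E \<le> card (S \<times> ({1..n} - S))"
      using card_inj_on_le by (metis finite_Diff finite_SigmaI finite_atLeastAtMost finS)
    also have "\<dots> = q * (n - q)"
      using S_sub S_card finS by (simp add: card_cartesian_product card_Diff_subset)
    finally show ?thesis .
  qed
  have qn: "q \<le> n" using S_sub S_card by (metis card_atLeastAtMost card_mono diff_Suc_1 finite_atLeastAtMost)
  have cE': "int (card E) \<le> int q * (int n - int q)" using cE qn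
    by (metis of_nat_diff of_nat_le_iff of_nat_mult)
  have PsiEq: "Psi n z = int n * (\<Sum>i\<in>{1..n}. \<bar>z i\<bar>) + (\<Sum>p\<in>P. \<bar>z (fst p) - z (snd p)\<bar>)" for z
    unfolding Psi_def P_def by (simp add: case_prod_beta')
  have "Psi n y \<ge> Psi n x + (int q)^2"
    unfolding PsiEq A1 using D cE' by (simp add: algebra_simps power2_eq_square)
  with P1 show ?thesis by simp
qed

end
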